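(* Let $(G,S)$ be a Cayley graph of a group of polynomial volume growth with homogeneous dimension $D$. Then for every (small) $\theta>0$ there exists $R_0(\theta,S)$ such that $$\frac{|B_p(R)|}{|B_p(r)|}\leq(1+\theta)\left(\frac{R}{r}\right)^D$$ for all $p\in G$ and all real $R\geq r\geq R_0(\theta,S)$.
   Context: For a group $G$ with finite symmetric generating set $S$, the Cayley graph has $x\sim y$ iff $x=ys$ for some $s\in S$, with word metric $d^S$ (shortest path length). $B_p(t)=\{x\in G: d^S(x,p)\leq t\}$ for real $t\ge0$, and $|B_p(t)|$ is its cardinality. $G$ has polynomial volume growth if $|B_e(n)|\leq Cn^A$ for some $C,A>0$ and all $n\geq1$. The homogeneous dimension is the integer $D$ for which $C_1n^D\leq|B_e(n)|\leq C_2n^D$ for all $n\ge1$ and some $C_1,C_2>0$; moreover $\lim_{n\to\infty}|B_e(n)|/n^D$ exists and is a finite positive constant. *)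

theory Defs
  imports "HOL-Analysis.Analysis" "HOL-Algebra.Algebra"
begin

inductive cayley_walk :: "('a, 'b) monoid_scheme \<Rightarrow> 'a set \<Rightarrow> nat \<Rightarrow> 'a \<Rightarrow> 'a \<Rightarrow> bool"
  for G S where
  refl: "x \<in> carrier G \<Longrightarrow> cayley_walk G S 0 x x"
| step: "\<lbrakk>s \<in> S; z \<in> carrier G; cayley_walk G S n z y\<rbrakk>
          \<Longrightarrow> cayley_walk G S (Suc n) (z \<otimes>\<^bsub>G\<^esub> s) y"

definition word_dist :: "('a, 'b) monoid_scheme \<Rightarrow> 'a set \<Rightarrow> 'a \<Rightarrow> 'a \<Rightarrow> nat" where
  "word_dist G S x y = (LEAST n. cayley_walk G S n x y)"

definition word_ball :: "('a, 'b) monoid_scheme \<Rightarrow> 'a set \<Rightarrow> 'a \<Rightarrow> real \<Rightarrow> 'a set" where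
  "word_ball G S p t = {x \<in> carrier G. real (word_dist G S x p) \<le> t}"

definition fin_sym_gen_set :: "('a, 'b) monoid_scheme \<Rightarrow> 'a set \<Rightarrow> bool" where
  "fin_sym_gen_set G S \<longleftrightarrow> finite S \<and> S \<subseteq> carrier G \<and> (\<forall>s\<in>S. inv\<^bsub>G\<^esub> s \<in> S)
     \<and> generate G S = carrier G"

definition polynomial_growth :: "('a, 'b) monoid_scheme \<Rightarrow> 'a set \<Rightarrow> bool" where
  "polynomial_growth G S \<longleftrightarrow> (\<exists>C A::real. C > 0 \<and> A > 0 \<and>
     (\<forall>n::nat. n \<ge> 1 \<longrightarrow> real (card (word_ball G S \<one>\<^bsub>G\<^esub> (real n))) \<le> C * real n powr A))"

text \<open>D is the homogeneous dimension: two-sided bounds C1 n^D <= |B_e(n)| <= C2 n^D,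
  together with the (standing) fact that |B_e(n)|/n^D converges to a finite positive limit.\<close>
definition homogeneous_dimension :: "('a, 'b) monoid_scheme \<Rightarrow> 'a set \<Rightarrow> nat \<Rightarrow> bool" where
  "homogeneous_dimension G S D \<longleftrightarrow>
     (\<exists>C1 C2::real. C1 > 0 \<and> C2 > 0 \<and> (\<forall>n::nat. n \<ge> 1 \<longrightarrow>
        C1 * real n ^ D \<le> real (card (word_ball G S \<one>\<^bsub>G\<^esub> (real n))) \<and>
        real (card (word_ball G S \<one>\<^bsub>G\<^esub> (real n))) \<le> C2 * real n ^ D))"

end

theory Submission
  imports Defs
begin

lemma walk_mult:
  assumes "group G" "S \<subseteq> carrier G" "g \<in> carrier G"
  shows "cayley_walk G S n x y \<Longrightarrow> cayley_walk G S n (g \<otimes>\<^bsub>G\<^esub> x) (g \<otimes>\<^bsub>G\<^esub> y)"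
proof (induction rule: cayley_walk.induct)
  case (refl x)
  then show ?case using assms by (simp add: cayley_walk.refl group.is_monoid monoid.m_closed)
next
  case (step s z n y)
  have sc: "s \<in> carrier G" using step assms by auto
  have "g \<otimes>\<^bsub>G\<^esub> (z \<otimes>\<^bsub>G\<^esub> s) = (g \<otimes>\<^bsub>G\<^esub> z) \<otimes>\<^bsub>G\<^esub> s"
    using assms sc step by (simp add: group.is_monoid monoid.m_assoc)
  have "cayley_walk G S (Suc n) ((g \<otimes>\<^bsub>G\<^esub> z) \<otimes>\<^bsub>G\<^esub> s) (g \<otimes>\<^bsub>G\<^esub> y)"
    by (rule cayley_walk.step) (use step sc assms in \<open>auto simp: group.is_monoid monoid.m_closed\<close>)
  then show ?case using \<open>g \<otimes>\<^bsub>G\<^esub> (z \<otimes>\<^bsub>G\<^esub> s) = _\<close> by simp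
qed

lemma walk_mult_iff:
  assumes "group G" "S \<subseteq> carrier G" "g \<in> carrier G" "x \<in> carrier G" "y \<in> carrier G"
  shows "cayley_walk G S n (g \<otimes>\<^bsub>G\<^esub> x) (g \<otimes>\<^bsub>G\<^esub> y) \<longleftrightarrow> cayley_walk G S n x y"
proof
  assume "cayley_walk G S n (g \<otimes>\<^bsub>G\<^esub> x) (g \<otimes>\<^bsub>G\<^esub> y)"
  then have "cayley_walk G S n (inv\<^bsub>G\<^esub> g \<otimes>\<^bsub>G\<^esub> (g \<otimes>\<^bsub>G\<^esub> x)) (inv\<^bsub>G\<^esub> g \<otimes>\<^bsub>G\<^esub> (g \<otimes>\<^bsub>G\<^esub> y))"
    using walk_mult[OF assms(1,2)] assms by (simp add: group.inv_closed)
  moreover have "\<And>u. u \<in> carrier G \<Longrightarrow> inv\<^bsub>G\<^esub> g \<otimes>\<^bsub>G\<^esub> (g \<otimes>\<^bsub>G\<^esub> u) = u"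
    using assms by (metis group.l_inv group.is_monoid monoid.m_assoc group.inv_closed monoid.l_one)
  ultimately show "cayley_walk G S n x y" using assms by simp
qed (use walk_mult[OF assms(1,2,3)] in auto)

lemma dist_mult:
  assumes "group G" "S \<subseteq> carrier G" "g \<in> carrier G" "x \<in> carrier G" "y \<in> carrier G"
  shows "word_dist G S (g \<otimes>\<^bsub>G\<^esub> x) (g \<otimes>\<^bsub>G\<^esub> y) = word_dist G S x y"
  unfolding word_dist_def using walk_mult_iff[OF assms] by simp

lemma card_ball_transl:
  assumes "group G" "S \<subseteq> carrier G" "p \<in> carrier G"
  shows "card (word_ball G S p t) = card (word_ball G S \<one>\<^bsub>G\<^esub> t)"
proof -
  have img: "(\<lambda>x. p \<otimes>\<^bsub>G\<^esub> x) ` word_ball G S \<one>\<^bsub>G\<^esub> t = word_ball G S p t"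
  proof safe
    fix x assume x: "x \<in> word_ball G S \<one>\<^bsub>G\<^esub> t"
    then have xc: "x \<in> carrier G" by (simp add: word_ball_def)
    have "word_dist G S (p \<otimes>\<^bsub>G\<^esub> x) (p \<otimes>\<^bsub>G\<^esub> \<one>\<^bsub>G\<^esub>) = word_dist G S x \<one>\<^bsub>G\<^esub>"
      using dist_mult[OF assms xc monoid.one_closed[OF group.is_monoid[OF assms(1)]]] .
    then show "p \<otimes>\<^bsub>G\<^esub> x \<in> word_ball G S p t" using x xc assms
      by (simp add: word_ball_def group.is_monoid monoid.m_closed monoid.r_one)
  next
    fix y assume y: "y \<in> word_ball G S p t"
    then have yc: "y \<in> carrier G" by (simp add: word_ball_def)
    define x where "x = inv\<^bsub>G\<^esub> p \<otimes>\<^bsub>G\<^esub> y"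
    have xc: "x \<in> carrier G" using assms yc by (simp add: x_def group.inv_closed group.is_monoid monoid.m_closed)
    have yx: "y = p \<otimes>\<^bsub>G\<^esub> x" using assms yc unfolding x_def
      by (metis group.r_inv group.is_monoid monoid.m_assoc group.inv_closed monoid.l_one)
    have "word_dist G S (p \<otimes>\<^bsub>G\<^esub> x) (p \<otimes>\<^bsub>G\<^esub> \<one>\<^bsub>G\<^esub>) = word_dist G S x \<one>\<^bsub>G\<^esub>"
      using dist_mult[OF assms xc monoid.one_closed[OF group.is_monoid[OF assms(1)]]] .
    then have "x \<in> word_ball G S \<one>\<^bsub>G\<^esub> t" using y yx xc assms
      by (simp add: word_ball_def group.is_monoid monoid.r_one)
    then show "y \<in> (\<lambda>x. p \<otimes>\<^bsub>G\<^esub> x) ` word_ball G S \<one>\<^bsub>G\<^esub> t" using yx by blast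
  qed
  have "inj_on (\<lambda>x. p \<otimes>\<^bsub>G\<^esub> x) (word_ball G S \<one>\<^bsub>G\<^esub> t)"
  proof (rule inj_onI)
    fix x y assume "x \<in> word_ball G S \<one>\<^bsub>G\<^esub> t" "y \<in> word_ball G S \<one>\<^bsub>G\<^esub> t"
      and e: "p \<otimes>\<^bsub>G\<^esub> x = p \<otimes>\<^bsub>G\<^esub> y"
    then have c: "x \<in> carrier G" "y \<in> carrier G" by (auto simp: word_ball_def)
    have "\<And>u. u \<in> carrier G \<Longrightarrow> inv\<^bsub>G\<^esub> p \<otimes>\<^bsub>G\<^esub> (p \<otimes>\<^bsub>G\<^esub> u) = u"
      using assms by (metis group.l_inv group.is_monoid monoid.m_assoc group.inv_closed monoid.l_one)
    then show "x = y" using c e by metis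
  qed
  then show ?thesis using img card_image by metis
qed

lemma real_floor_le:
  assumes "(t::real) \<ge> 0"
  shows "real d \<le> t \<longleftrightarrow> real d \<le> real (nat \<lfloor>t\<rfloor>)"
proof -
  have "real (nat \<lfloor>t\<rfloor>) = of_int \<lfloor>t\<rfloor>" using assms by simp
  moreover have "real d \<le> t \<longleftrightarrow> int d \<le> \<lfloor>t\<rfloor>" by (simp add: le_floor_iff)
  moreover have "int d \<le> \<lfloor>t\<rfloor> \<longleftrightarrow> real d \<le> of_int \<lfloor>t\<rfloor>"
    by (metis of_int_le_iff of_int_of_nat_eq)
  ultimately show ?thesis by simp
qed

lemma ball_floor:
  assumes "t \<ge> 0"
  shows "word_ball G S q t = word_ball G S q (real (nat \<lfloor>t\<rfloor>))"
  unfolding word_ball_def using real_floor_le[OF assms] by auto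

theorem lemma2p1:
  fixes G :: "('a, 'b) monoid_scheme" and S :: "'a set" and D :: nat
  assumes "group G"
    and "fin_sym_gen_set G S"
    and "polynomial_growth G S"
    and "homogeneous_dimension G S D"
    and "\<exists>L>0. (\<lambda>n. real (card (word_ball G S \<one>\<^bsub>G\<^esub> (real n))) / real n ^ D) \<longlonglongrightarrow> L"
  shows "\<forall>\<theta>>0. \<exists>R0::real. \<forall>p\<in>carrier G. \<forall>R r::real. R0 \<le> r \<longrightarrow> r \<le> R \<longrightarrow>
           real (card (word_ball G S p R)) / real (card (word_ball G S p r))
             \<le> (1 + \<theta>) * (R / r) ^ D"
proof (intro allI impI)
  fix \<theta> :: real assume th: "\<theta> > 0"
  have SG: "S \<subseteq> carrier G" using assms(2) by (simp add: fin_sym_gen_set_def)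
  define f where "f n = real (card (word_ball G S \<one>\<^bsub>G\<^esub> (real n)))" for n :: nat
  obtain L where L: "L > 0" "(\<lambda>n. f n / real n ^ D) \<longlonglongrightarrow> L" using assms(5) unfolding f_def by blast
  define \<epsilon> where "\<epsilon> = \<theta> / (\<theta> + 3)"
  have ep: "\<epsilon> > 0" "\<epsilon> < 1" using th by (auto simp: \<epsilon>_def field_simps)
  have K: "(1 + \<epsilon>) / (1 - \<epsilon>) = 1 + 2 * \<theta> / 3" using th by (simp add: \<epsilon>_def field_simps)
  obtain N1 where N1: "\<And>n. n \<ge> N1 \<Longrightarrow> norm (f n / real n ^ D - L) < \<epsilon> * L"
    using L(2) ep L(1) unfolding LIMSEQ_iff by (meson mult_pos_pos)
  define c where "c = (1 + \<theta>) / (1 + 2 * \<theta> / 3)"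
  have c1: "c > 1" using th by (simp add: c_def field_simps)
  have hl: "(\<lambda>n. (1 + 1 / real n) ^ D) \<longlonglongrightarrow> (1 + 0) ^ D"
    by (intro tendsto_intros lim_1_over_n)
  obtain N2 where N2: "\<And>n. n \<ge> N2 \<Longrightarrow> norm ((1 + 1 / real n) ^ D - 1) < c - 1"
    using hl c1 unfolding LIMSEQ_iff by (metis diff_gt_0_iff_gt power_one add_0_right)
  define N where "N = max (max N1 N2) 1"
  show "\<exists>R0::real. \<forall>p\<in>carrier G. \<forall>R r::real. R0 \<le> r \<longrightarrow> r \<le> R \<longrightarrow>
           real (card (word_ball G S p R)) / real (card (word_ball G S p r))
             \<le> (1 + \<theta>) * (R / r) ^ D"
  proof (intro exI ballI allI impI)
    fix p R r assume p: "p \<in> carrier G" and Nr: "real N \<le> r" and rR: "r \<le> R"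
    have r0: "r \<ge> 1" "R \<ge> 1" using Nr rR by (auto simp: N_def)
    define a where "a = nat \<lfloor>R\<rfloor>"
    define b where "b = nat \<lfloor>r\<rfloor>"
    have "int N \<le> \<lfloor>r\<rfloor>" using Nr by (simp add: le_floor_iff)
    then have bN: "b \<ge> N" unfolding b_def by linarith
    have b1: "b \<ge> 1" "b \<ge> N1" "b \<ge> N2" using bN by (auto simp: N_def)
    have ab: "a \<ge> b" unfolding a_def b_def using rR by (simp add: floor_mono nat_mono)
    have a1: "a \<ge> 1" "a \<ge> N1" using ab b1 by auto
    have aR: "real a \<le> R" unfolding a_def using r0 by simp
    have rb: "r \<le> real b + 1" unfolding b_def using r0 by linarith
    have cardR: "real (card (word_ball G S p R)) = f a"
      unfolding f_def a_def using card_ball_transl[OF assms(1) SG p] ball_floor r0 by (metis order.trans zero_le_one)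
    have cardr: "real (card (word_ball G S p r)) = f b"
      unfolding f_def b_def using card_ball_transl[OF assms(1) SG p] ball_floor r0 by (metis order.trans zero_le_one)
    have apos: "real a ^ D > 0" using a1 by simp
    have bpos: "real b ^ D > 0" using b1 by simp
    have "f a / real a ^ D \<le> (1 + \<epsilon>) * L" using N1[OF a1(2)] by (simp add: abs_less_iff algebra_simps)
    then have fa: "f a \<le> (1 + \<epsilon>) * L * real a ^ D" using apos by (simp add: divide_le_eq)
    have "f b / real b ^ D \<ge> (1 - \<epsilon>) * L" using N1[OF b1(2)] by (simp add: abs_less_iff algebra_simps)
    then have fb: "f b \<ge> (1 - \<epsilon>) * L * real b ^ D" using bpos by (simp add: le_divide_eq)
    have fbpos: "(1 - \<epsilon>) * L * real b ^ D > 0" using ep L(1) bpos by simp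
    have aRD: "real a ^ D \<le> R ^ D" using aR by (simp add: power_mono)
    have hb: "(1 + 1 / real b) ^ D < c" using N2[OF b1(3)] by (simp add: abs_less_iff)
    have "r ^ D \<le> (real b + 1) ^ D" using rb r0 by (simp add: power_mono)
    also have "\<dots> = real b ^ D * (1 + 1 / real b) ^ D"
      using b1 by (simp add: power_mult_distrib[symmetric] field_simps)
    also have "\<dots> \<le> real b ^ D * c" using hb bpos by simp
    finally have rD: "r ^ D \<le> real b ^ D * c" .
    have "f a / f b \<le> ((1 + \<epsilon>) * L * R ^ D) / ((1 - \<epsilon>) * L * real b ^ D)"
    proof (rule frac_le)
      show "0 \<le> (1 + \<epsilon>) * L * R ^ D" using ep L(1) r0 by simp
      show "f a \<le> (1 + \<epsilon>) * L * R ^ D" using fa aRD ep L(1)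
        by (meson order.trans mult_left_mono less_le mult_pos_pos add_pos_pos zero_less_one)
    qed (use fbpos fb in auto)
    also have "\<dots> = ((1 + \<epsilon>) / (1 - \<epsilon>)) * R ^ D / real b ^ D"
      using L(1) ep bpos by (simp add: field_simps)
    also have "\<dots> = (1 + 2 * \<theta> / 3) * R ^ D / real b ^ D" using K by simp
    also have "\<dots> \<le> (1 + \<theta>) * R ^ D / r ^ D"
    proof -
      have rpos: "r ^ D > 0" using r0 by simp
      have "(1 + 2 * \<theta> / 3) * r ^ D \<le> (1 + 2 * \<theta> / 3) * (real b ^ D * c)"
        using rD th by (simp add: mult_left_mono)
      also have "\<dots> = (1 + \<theta>) * real b ^ D" using th by (simp add: c_def field_simps)
      finally have key: "(1 + 2 * \<theta> / 3) * r ^ D \<le> (1 + \<theta>) * real b ^ D" .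
      have RD: "R ^ D \<ge> 0" using r0 by simp
      have "(1 + 2 * \<theta> / 3) * R ^ D * r ^ D \<le> (1 + \<theta>) * R ^ D * real b ^ D"
        using mult_left_mono[OF key RD] by (simp add: algebra_simps)
      then show ?thesis using rpos bpos by (simp add: divide_simps)
    qed
    also have "\<dots> = (1 + \<theta>) * (R / r) ^ D" by (simp add: power_divide)
    finally show "real (card (word_ball G S p R)) / real (card (word_ball G S p r))
             \<le> (1 + \<theta>) * (R / r) ^ D" using cardR cardr by simp
  qed
qed

end
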